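(* Let $g_1=(y^2+x)\,dx\,dy$, $g_2=-2\frac{y^2+x}{y^3}dx\,dy+\frac{(y^2+x)^2}{y^4}dy^2$, $g_3=\frac{y^2+x}{(3x-y^2)^6}\big(9(y^2+x)dx^2-4y(9x+y^2)dx\,dy+12x(y^2+x)dy^2\big)$. Let $(u,v)\mapsto(x(u,v),y(u,v))$ be a local diffeomorphism such that for each $i\in\{1,2,3\}$ the pullback of $g_i$ (written in $(x,y)$) equals $\mu_i\,g_i$ written in the coordinates $(u,v)$, for some constants $\mu_i\ne0$. Then there is $k\in\mathbb R\setminus\{0\}$ with $x=k^2u$ and $y=kv$.
   Context: $dx\,dy$ denotes the symmetric product. The metrics $g_1,g_2,g_3$ are projectively equivalent and their Liouville tensors are eigenvectors of the Lie derivative along the projective vector field $w=2x\partial_x+y\partial_y$, with $\mathcal L_wg_1=5g_1$, $\mathcal L_wg_2=2g_2$, $\mathcal L_wg_3=-4g_3$. *)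

theory Defs
  imports "HOL-Analysis.Analysis"
begin

text \<open>A quadratic differential (symmetric 2-tensor) E dx^2 + F dx dy + G dy^2 on the plane
  is represented by the quadratic form (p, (a,b)) \<mapsto> E(p) a^2 + F(p) a b + G(p) b^2,
  where dx dy is the symmetric product (so dx dy (v,v) = dx(v) dy(v)).\<close>

definition g1 :: "real \<times> real \<Rightarrow> real \<times> real \<Rightarrow> real" where
  "g1 p v = (case p of (x, y) \<Rightarrow> case v of (a, b) \<Rightarrow> (y^2 + x) * a * b)"

definition g2 :: "real \<times> real \<Rightarrow> real \<times> real \<Rightarrow> real" where
  "g2 p v = (case p of (x, y) \<Rightarrow> case v of (a, b) \<Rightarrow>
      - 2 * (y^2 + x) / y^3 * a * b + (y^2 + x)^2 / y^4 * b^2)"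

definition g3 :: "real \<times> real \<Rightarrow> real \<times> real \<Rightarrow> real" where
  "g3 p v = (case p of (x, y) \<Rightarrow> case v of (a, b) \<Rightarrow>
      (y^2 + x) / (3 * x - y^2)^6 *
        (9 * (y^2 + x) * a^2 - 4 * y * (9 * x + y^2) * a * b + 12 * x * (y^2 + x) * b^2))"

definition metric_domain :: "(real \<times> real) set" where
  "metric_domain = {(x, y). y \<noteq> 0 \<and> 3 * x \<noteq> y^2}"

definition pulls_back_to_multiple ::
  "(real \<times> real \<Rightarrow> real \<times> real \<Rightarrow> real) \<Rightarrow> (real \<times> real \<Rightarrow> real \<times> real)
   \<Rightarrow> (real \<times> real \<Rightarrow> (real \<times> real) \<Rightarrow>\<^sub>L (real \<times> real)) \<Rightarrow> (real \<times> real) set \<Rightarrow> real \<Rightarrow> bool" where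
  "pulls_back_to_multiple g \<phi> D U \<mu> \<longleftrightarrow>
     (\<forall>p\<in>U. \<forall>v. g (\<phi> p) (blinfun_apply (D p) v) = \<mu> * g p v)"

end

theory Submission
  imports Defs
begin

lemma lin: fixes L :: "(real\<times>real) \<Rightarrow>\<^sub>L (real\<times>real)" shows "blinfun_apply L (v1,v2) = (v1  *  fst (L (1,0)) + v2  *  fst (L (0,1)), v1  *  snd (L(1,0)) + v2  *  snd (L (0,1)))"
proof -
  have "(v1,v2) = v1  *\<^sub>R (1,0) + v2  *\<^sub>R ((0,1)::real\<times>real)" by simp
  then have "blinfun_apply L (v1,v2) = v1  *\<^sub>R L (1,0) + v2  *\<^sub>R L (0,1)"
    by (metis blinfun.add_right blinfun.scaleR_right)
  then show ?thesis by (simp add: prod_eq_iff)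
qed

lemma stepA:
 fixes x y X Y a b c d \<mu>1 \<mu>2 :: real
 assumes "y\<noteq>0" "Y\<noteq>0" "y^2+x\<noteq>0" "\<mu>1\<noteq>0"
 and h1: "\<And>v1 v2. g1 (X,Y) (a *  v1+b *  v2, c *  v1+d *  v2) = \<mu>1  *  g1 (x,y) (v1,v2)"
 and h2: "\<And>v1 v2. g2 (X,Y) (a *  v1+b *  v2, c *  v1+d *  v2) = \<mu>2  *  g2 (x,y) (v1,v2)"
 shows "c = 0 \<and> b = 0 \<and> \<mu>2  *  Y^3 = \<mu>1  *  y^3"
proof -
  define S where "S = Y^2+X"
  define s where "s = y^2+x"
  have e1: "S * a * c = 0" using h1[of 1 0] by (simp add: g1_def S_def)
  have e2: "S * b * d = 0" using h1[of 0 1] by (simp add: g1_def S_def)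
  have e3: "S * (a+b) * (c+d) = \<mu>1  *  s" using h1[of 1 1] by (simp add: g1_def S_def s_def)
  have "s \<noteq> 0" using assms s_def by simp
  have "S * (a * d+b * c) = S * (a+b) * (c+d) - S * a * c - S * b * d" by (simp add: algebra_simps)
  then have ad: "S * (a * d+b * c) = \<mu>1 * s" using e1 e2 e3 by simp
  then have S0: "S \<noteq> 0" using \<open>s\<noteq>0\<close> assms by auto
  have ac: "a * c = 0" using e1 S0 by simp
  have f1: "-2 * S/Y^3 * a * c + S^2/Y^4 * c^2 = 0" using h2[of 1 0] by (simp add: g2_def S_def)
  then have "S^2/Y^4 * c^2 = 0" using ac by simp
  then have c0: "c = 0" using S0 assms by simp
  then have "S * a * d = \<mu>1 * s" using ad by simp
  then have "a * d \<noteq> 0" using \<open>s\<noteq>0\<close> assms by auto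
  then have b0: "b = 0" using e2 S0 by simp
  have f2: "-2 * S/Y^3 * a * d + S^2/Y^4 * d^2 = \<mu>2 * (-2 * s/y^3 + s^2/y^4)"
    using h2[of 1 1] c0 b0 by (simp add: g2_def S_def s_def)
  have f3: "S^2/Y^4 * d^2 = \<mu>2 * (s^2/y^4)"
    using h2[of 0 1] c0 b0 by (simp add: g2_def S_def s_def)
  have f2': "-2 * (S * a * d/Y^3) + S^2/Y^4 * d^2 = \<mu>2 * (-2 * (s/y^3)) + \<mu>2 * (s^2/y^4)" using f2 by (simp add: algebra_simps)
  have "S * a * d/Y^3 = \<mu>2 * (s/y^3)" using f2' f3 by linarith
  then have "S * a * d/Y^3 = \<mu>2 * s/y^3" by simp
  then have "\<mu>1 * s/Y^3 = \<mu>2 * s/y^3" using \<open>S * a * d = \<mu>1 * s\<close> by simp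
  then have "\<mu>2  *  Y^3 = \<mu>1  *  y^3" using \<open>s\<noteq>0\<close> assms by (simp add: field_simps)
  then show ?thesis using c0 b0 by simp
qed

lemma stepD:
 fixes x y X Y a \<alpha> \<mu>1 \<mu>2 \<mu>3 :: real
 assumes "y\<noteq>0" "Y\<noteq>0" "y^2+x\<noteq>0" "3 * x\<noteq>y^2" "3 * X\<noteq>Y^2" "\<alpha>\<noteq>0" "\<mu>1\<noteq>0" "\<mu>2\<noteq>0" "\<mu>3\<noteq>0" "Y = \<alpha> * y"
 and h1: "\<And>v1 v2. g1 (X,Y) (a * v1, \<alpha> * v2) = \<mu>1 * g1 (x,y) (v1,v2)"
 and h2: "\<And>v1 v2. g2 (X,Y) (a * v1, \<alpha> * v2) = \<mu>2 * g2 (x,y) (v1,v2)"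
 and h3: "\<And>v1 v2. g3 (X,Y) (a * v1, \<alpha> * v2) = \<mu>3 * g3 (x,y) (v1,v2)"
 shows "X = \<mu>1^2/(\<mu>2 * \<alpha>^6) * x"
proof -
  define S where "S = Y^2+X"
  define s where "s = y^2+x"
  define T where "T = 3 * X - Y^2"
  define t where "t = 3 * x - y^2"
  have s0: "s\<noteq>0" "t\<noteq>0" "T\<noteq>0" using assms s_def t_def T_def by auto
  have e3: "S * a * \<alpha> = \<mu>1 * s" using h1[of 1 1] by (simp add: g1_def S_def s_def)
  then have S0: "S\<noteq>0" using s0 assms by auto
  have f3: "S^2/Y^4 * \<alpha>^2 = \<mu>2 * (s^2/y^4)" using h2[of 0 1] by (simp add: g2_def S_def s_def)
  then have "S^2 * \<alpha>^2 * y^4 = \<mu>2 * s^2 * Y^4" using assms by (simp add: field_simps)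
  then have "S^2 * \<alpha>^2 * y^4 = (\<mu>2 * s^2 * \<alpha>^2) * (\<alpha>^2 * y^4)" using assms by (simp add: power_mult_distrib)
  then have "S^2 * \<alpha>^2 = (\<mu>2 * \<alpha>^2 * s^2) * \<alpha>^2" using assms by (simp add: field_simps)
  then have SS: "S^2 = \<mu>2 * \<alpha>^2 * s^2" using assms by simp
  have k1: "S/T^6 * (9 * S * a^2) = \<mu>3 * (s/t^6 * (9 * s))" using h3[of 1 0] by (simp add: g3_def S_def s_def T_def t_def power_mult_distrib)
  have k2: "S/T^6 * (12 * X * S * \<alpha>^2) = \<mu>3 * (s/t^6 * (12 * x * s))" using h3[of 0 1] by (simp add: g3_def S_def s_def T_def t_def power_mult_distrib)
  have "S/T^6 * (9 * S * a^2) = 9 * (a^2 * (S^2/T^6))" "\<mu>3 * (s/t^6 * (9 * s)) = 9 * (\<mu>3 * s^2/t^6)"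
    by (simp_all add: power2_eq_square)
  then have k1': "a^2 * (S^2/T^6) = \<mu>3 * s^2/t^6" using k1 by linarith
  have "S/T^6 * (12 * X * S * \<alpha>^2) = 12 * ((X * \<alpha>^2) * (S^2/T^6))" "\<mu>3 * (s/t^6 * (12 * x * s)) = 12 * (x * (\<mu>3 * s^2/t^6))"
    by (simp_all add: power2_eq_square)
  then have k2': "(X * \<alpha>^2) * (S^2/T^6) = x * (\<mu>3 * s^2/t^6)" using k2 by linarith
  have "S^2/T^6 \<noteq> 0" using S0 s0 by simp
  then have Xa: "X * \<alpha>^2 = x * a^2" using k1' k2' by (metis mult.assoc mult_right_cancel)
  have "(S * a * \<alpha>)^2 = \<mu>1^2 * s^2" using e3 by (simp add: power_mult_distrib)
  then have "S^2 * a^2 * \<alpha>^2 = \<mu>1^2 * s^2" by (simp add: power_mult_distrib)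
  then have "(\<mu>2 * \<alpha>^2 * a^2 * \<alpha>^2) * s^2 = \<mu>1^2 * s^2" using SS by (simp add: algebra_simps)
  then have "\<mu>2 * \<alpha>^2 * a^2 * \<alpha>^2 = \<mu>1^2" using s0 by simp
  then have aq: "\<mu>2 * (a^2 * \<alpha>^4) = \<mu>1^2" by (simp add: algebra_simps power_add[symmetric])
  have h6: "\<alpha>^6 = \<alpha>^2 * \<alpha>^4" by (simp add: power_add[symmetric])
  have "X * (\<mu>2 * \<alpha>^6) = (X * \<alpha>^2) * (\<mu>2 * \<alpha>^4)" unfolding h6 by (simp only: mult_ac)
  also have "\<dots> = x * (\<mu>2 * (a^2 * \<alpha>^4))" using Xa by (simp add: mult_ac)
  also have "\<dots> = x * \<mu>1^2" using aq by simp
  finally have "X * (\<mu>2 * \<alpha>^6) = x * \<mu>1^2" .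
  moreover have "\<mu>2 * \<alpha>^6 \<noteq> 0" using assms by simp
  ultimately show ?thesis by (simp add: field_simps)
qed

lemma extend:
  fixes f g :: "real\<times>real \<Rightarrow> real"
  assumes "open U" "continuous_on U f" "continuous_on U g"
   "\<And>q. q\<in>U \<Longrightarrow> (snd q)^2 + fst q \<noteq> 0 \<Longrightarrow> f q = g q" "p\<in>U"
  shows "f p = g p"
proof (cases "(snd p)^2 + fst p = 0")
  case False thus ?thesis using assms by auto
next
  case True
  define F where "F t = f (p + (t,0)) - g (p + (t,0))" for t::real
  obtain e where e: "e>0" "ball p e \<subseteq> U" using assms open_contains_ball by blast
  have cf: "isCont f p" "isCont g p" using assms continuous_on_eq_continuous_at by blast+
  have ic: "isCont (\<lambda>t::real. p + (t,0)) 0" by (intro continuous_intros)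
  have "isCont (\<lambda>t. f (p + (t,0))) 0" by (rule isCont_o2[OF ic]) (simp add: cf zero_prod_def[symmetric])
  moreover have "isCont (\<lambda>t. g (p + (t,0))) 0" by (rule isCont_o2[OF ic]) (simp add: cf zero_prod_def[symmetric])
  ultimately have "isCont F 0" unfolding F_def by (intro continuous_intros)
  then have lim: "(F \<longlongrightarrow> F 0) (at 0)" by (simp add: isCont_def)
  have ev: "eventually (\<lambda>t. F t = 0) (at 0)"
    unfolding eventually_at
  proof (intro exI[of _ e] conjI ballI impI)
    show "e > 0" by fact
    fix t :: real assume "t \<in> UNIV" and t: "t \<noteq> 0 \<and> dist t 0 < e"
    have "dist p (p + (t,0)) = \<bar>t\<bar>" by (simp add: dist_norm)
    then have "p + (t,0) \<in> U" using t e by auto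
    moreover have "(snd (p + (t,0)))^2 + fst (p + (t,0)) \<noteq> 0" using True t by simp
    ultimately show "F t = 0" using assms(4) by (simp add: F_def)
  qed
  then have "(F \<longlongrightarrow> 0) (at 0)" by (rule tendsto_eventually)
  then have "F 0 = 0" using lim tendsto_unique trivial_limit_at by metis
  thus ?thesis by (simp add: F_def zero_prod_def[symmetric])
qed

lemma deriv_snd:
  fixes L :: "(real\<times>real) \<Rightarrow>\<^sub>L (real\<times>real)"
  assumes "open U" "p\<in>U" "(\<phi> has_derivative blinfun_apply L) (at p)" "\<And>q. q\<in>U \<Longrightarrow> snd (\<phi> q) = \<alpha> * snd q"
  shows "snd (L h) = \<alpha> * snd h"
proof -
  have 1: "((\<lambda>q. snd (\<phi> q)) has_derivative (\<lambda>h. snd (L h))) (at p)" using assms(3) by (rule has_derivative_snd)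
  have 2: "((\<lambda>q. \<alpha> * snd q) has_derivative (\<lambda>h. \<alpha> * snd h)) (at p)" by (auto intro!: derivative_eq_intros)
  have "((\<lambda>q. \<alpha> * snd q) has_derivative (\<lambda>h. snd (L h))) (at p)"
    by (rule has_derivative_transform_within_open[OF 1 assms(1,2)]) (simp add: assms(4))
  then have "(\<lambda>h. snd (L h)) = (\<lambda>h. \<alpha> * snd h)" using 2 has_derivative_unique by blast
  then show ?thesis by metis
qed

lemma deriv_fst:
  fixes L :: "(real\<times>real) \<Rightarrow>\<^sub>L (real\<times>real)"
  assumes "open U" "p\<in>U" "(\<phi> has_derivative blinfun_apply L) (at p)" "\<And>q. q\<in>U \<Longrightarrow> fst (\<phi> q) = \<alpha> * fst q"
  shows "fst (L h) = \<alpha> * fst h"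
proof -
  have 1: "((\<lambda>q. fst (\<phi> q)) has_derivative (\<lambda>h. fst (L h))) (at p)" using assms(3) by (rule has_derivative_fst)
  have 2: "((\<lambda>q. \<alpha> * fst q) has_derivative (\<lambda>h. \<alpha> * fst h)) (at p)" by (auto intro!: derivative_eq_intros)
  have "((\<lambda>q. \<alpha> * fst q) has_derivative (\<lambda>h. fst (L h))) (at p)"
    by (rule has_derivative_transform_within_open[OF 1 assms(1,2)]) (simp add: assms(4))
  then have "(\<lambda>h. fst (L h)) = (\<lambda>h. \<alpha> * fst h)" using 2 has_derivative_unique by blast
  then show ?thesis by metis
qed

lemma cube_inj: "(x::real)^3 = y^3 \<Longrightarrow> x = y"
  by (metis odd_real_root_power_cancel odd_numeral)

theorem lemma6p1:
  fixes \<phi> :: "real \<times> real \<Rightarrow> real \<times> real"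
    and D :: "real \<times> real \<Rightarrow> (real \<times> real) \<Rightarrow>\<^sub>L (real \<times> real)"
    and U :: "(real \<times> real) set"
    and \<mu>1 \<mu>2 \<mu>3 :: real
  assumes "open U" and "connected U" and "U \<noteq> {}"
    and "U \<subseteq> metric_domain" and "\<phi> ` U \<subseteq> metric_domain"
    and "\<And>p. p \<in> U \<Longrightarrow> (\<phi> has_derivative blinfun_apply (D p)) (at p)"
    and "continuous_on U D"
    and "\<And>p. p \<in> U \<Longrightarrow> bij (blinfun_apply (D p))"
    and "\<mu>1 \<noteq> 0" and "\<mu>2 \<noteq> 0" and "\<mu>3 \<noteq> 0"
    and "pulls_back_to_multiple g1 \<phi> D U \<mu>1"
    and "pulls_back_to_multiple g2 \<phi> D U \<mu>2"
    and "pulls_back_to_multiple g3 \<phi> D U \<mu>3"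
  shows "\<exists>k::real. k \<noteq> 0 \<and> (\<forall>u v. (u, v) \<in> U \<longrightarrow> \<phi> (u, v) = (k^2 * u, k * v))"
proof -
  note op = assms(1) and der = assms(6)
  have dom: "snd p \<noteq> 0 \<and> 3 * fst p \<noteq> (snd p)^2" if "p \<in> U" for p
    using assms(4) that unfolding metric_domain_def by (cases p) auto
  have domphi: "snd (\<phi> p) \<noteq> 0 \<and> 3 * fst (\<phi> p) \<noteq> (snd (\<phi> p))^2" if "p \<in> U" for p
    using assms(5) that unfolding metric_domain_def by (cases "\<phi> p") auto
  have cont: "continuous_on U \<phi>"
  proof (rule continuous_at_imp_continuous_on, rule ballI)
    fix p assume "p \<in> U" then show "isCont \<phi> p" using der has_derivative_continuous by blast
  qed
  define A where "A p = fst (D p (1,0))" for p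
  define B where "B p = fst (D p (0,1))" for p
  define C where "C p = snd (D p (1,0))" for p
  define E where "E p = snd (D p (0,1))" for p
  have pb: "g (fst (\<phi> p), snd (\<phi> p)) (A p * v1 + B p * v2, C p * v1 + E p * v2) = \<mu> * g (fst p, snd p) (v1,v2)"
    if "pulls_back_to_multiple g \<phi> D U \<mu>" "p \<in> U" for g \<mu> p v1 v2
  proof -
    have "g (\<phi> p) (D p (v1,v2)) = \<mu> * g p (v1,v2)" using that by (simp add: pulls_back_to_multiple_def)
    then show ?thesis using lin[of "D p" v1 v2] by (simp add: A_def B_def C_def E_def mult.commute)
  qed
  have sA: "C p = 0 \<and> B p = 0 \<and> \<mu>2 * (snd (\<phi> p))^3 = \<mu>1 * (snd p)^3"
    if "p \<in> U" "(snd p)^2 + fst p \<noteq> 0" for p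
    apply (rule stepA[where X="fst (\<phi> p)" and Y="snd (\<phi> p)" and x="fst p" and y="snd p" and a="A p" and b="B p" and c="C p" and d="E p"])
    using dom[OF that(1)] domphi[OF that(1)] that assms(9)
        pb[OF assms(12) that(1)] pb[OF assms(13) that(1)] by auto
  have Y3: "\<mu>2 * (snd (\<phi> p))^3 = \<mu>1 * (snd p)^3" if "p \<in> U" for p
    apply (rule extend[OF op _ _ _ that])
      apply (intro continuous_intros cont)
     apply (intro continuous_intros)
    using sA by blast
  define \<alpha> where "\<alpha> = root 3 (\<mu>1/\<mu>2)"
  have a3: "\<alpha>^3 = \<mu>1/\<mu>2" unfolding \<alpha>_def by (simp add: odd_real_root_pow)
  have a0: "\<alpha> \<noteq> 0" using a3 assms(9,10) by auto
  have Yeq: "snd (\<phi> q) = \<alpha> * snd q" if "q \<in> U" for q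
  proof (rule cube_inj)
    show "snd (\<phi> q) ^ 3 = (\<alpha> * snd q) ^ 3"
    proof -
      have e: "\<mu>2 * \<alpha>^3 = \<mu>1" using a3 assms(10) by (simp add: field_simps)
      have "\<mu>2 * snd (\<phi> q)^3 = \<mu>2 * (\<alpha>^3 * snd q^3)" using Y3[OF that] e by (metis mult.assoc)
      then show ?thesis using assms(10) by (simp add: power_mult_distrib)
    qed
  qed
  have Dsnd: "snd (D p h) = \<alpha> * snd h" if "p \<in> U" for p h
    by (rule deriv_snd[OF op that der[OF that] Yeq])
  define \<kappa> where "\<kappa> = \<mu>1^2/(\<mu>2 * \<alpha>^6)"
  have k0: "\<kappa> \<noteq> 0" unfolding \<kappa>_def using assms(9,10) a0 by simp
  have Xs: "fst (\<phi> p) = \<kappa> * fst p" if "p \<in> U" "(snd p)^2 + fst p \<noteq> 0" for p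
  proof -
    have CE: "C p = 0" "E p = \<alpha>" "B p = 0" using Dsnd[OF that(1)] sA[OF that] unfolding C_def E_def by auto
    have h1: "g1 (fst (\<phi> p), snd (\<phi> p)) (A p * v1, \<alpha> * v2) = \<mu>1 * g1 (fst p, snd p) (v1,v2)" for v1 v2
      using pb[OF assms(12) that(1), of v1 v2] CE by simp
    have h2: "g2 (fst (\<phi> p), snd (\<phi> p)) (A p * v1, \<alpha> * v2) = \<mu>2 * g2 (fst p, snd p) (v1,v2)" for v1 v2
      using pb[OF assms(13) that(1), of v1 v2] CE by simp
    have h3: "g3 (fst (\<phi> p), snd (\<phi> p)) (A p * v1, \<alpha> * v2) = \<mu>3 * g3 (fst p, snd p) (v1,v2)" for v1 v2
      using pb[OF assms(14) that(1), of v1 v2] CE by simp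
    show ?thesis unfolding \<kappa>_def
      by (rule stepD[OF _ _ _ _ _ a0 assms(9,10,11) Yeq[OF that(1)] h1 h2 h3])
        (use dom[OF that(1)] domphi[OF that(1)] that in simp)+
  qed
  have Xeq: "fst (\<phi> q) = \<kappa> * fst q" if "q \<in> U" for q
    apply (rule extend[OF op _ _ _ that])
      apply (intro continuous_intros cont)
     apply (intro continuous_intros)
    using Xs by blast
  have Dfst: "fst (D p h) = \<kappa> * fst h" if "p \<in> U" for p h
    by (rule deriv_fst[OF op that der[OF that] Xeq])
  have G: "((\<alpha> * snd p)^2 + \<kappa> * fst p) * \<kappa> * \<alpha> = \<mu>1 * ((snd p)^2 + fst p)" if "p \<in> U" for p
  proof -
    have "A p = \<kappa>" "B p = 0" "C p = 0" "E p = \<alpha>" unfolding A_def B_def C_def E_def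
      using Dfst[OF that] Dsnd[OF that] by auto
    then show ?thesis using pb[OF assms(12) that, of 1 1] Xeq[OF that] Yeq[OF that]
      by (simp add: g1_def case_prod_beta)
  qed
  obtain p where p: "p \<in> U" using assms(3) by blast
  obtain e where e: "e>0" "ball p e \<subseteq> U" using op p open_contains_ball by blast
  have p1: "p + (e/2, 0) \<in> U" using e by (auto simp: dist_norm)
  have G0: "((\<alpha> * snd p)^2 + \<kappa> * fst p) * \<kappa> * \<alpha> = \<mu>1 * ((snd p)^2 + fst p)" using G[OF p] .
  have G1: "((\<alpha> * snd p)^2 + \<kappa> * (fst p + e/2)) * \<kappa> * \<alpha> = \<mu>1 * ((snd p)^2 + (fst p + e/2))" using G[OF p1] by simp
  have "\<kappa> * \<kappa> * \<alpha> * (e/2) = \<mu>1 * (e/2)" using G0 G1 by algebra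
  then have K1: "\<kappa> * \<kappa> * \<alpha> = \<mu>1" using e by simp
  have e1: "((\<alpha> * snd p)^2 + \<kappa> * fst p) * \<kappa> * \<alpha> = (\<alpha> * snd p)^2 * \<kappa> * \<alpha> + fst p * (\<kappa> * \<kappa> * \<alpha>)"
    by (simp add: algebra_simps)
  have e2: "\<mu>1 * ((snd p)^2 + fst p) = \<mu>1 * (snd p)^2 + fst p * \<mu>1" by (simp add: algebra_simps)
  have "(\<alpha> * snd p)^2 * \<kappa> * \<alpha> + fst p * \<mu>1 = \<mu>1 * (snd p)^2 + fst p * \<mu>1"
    using G0 unfolding e1 e2 K1 .
  then have H: "(\<alpha> * snd p)^2 * \<kappa> * \<alpha> = \<mu>1 * (snd p)^2" by simp
  have "(\<kappa> * \<alpha>^3) * (snd p)^2 = (\<alpha> * snd p)^2 * \<kappa> * \<alpha>"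
    by (simp add: power2_eq_square power3_eq_cube mult_ac)
  then have "(\<kappa> * \<alpha>^3) * (snd p)^2 = \<mu>1 * (snd p)^2" using H by simp
  then have K3: "\<kappa> * \<alpha>^3 = \<mu>1" using dom[OF p] by simp
  have "\<kappa> * (\<kappa> * \<alpha>) = \<mu>1" using K1 by (simp add: mult.assoc)
  moreover have "\<kappa> * (\<alpha>^2 * \<alpha>) = \<mu>1" using K3 by (simp add: power3_eq_cube power2_eq_square mult.assoc)
  ultimately have "\<kappa> * (\<kappa> * \<alpha>) = \<kappa> * (\<alpha>^2 * \<alpha>)" by simp
  then have "\<kappa> = \<alpha>^2" using k0 a0 by simp
  then show ?thesis using Xeq Yeq a0 by (intro exI[of _ \<alpha>]) (auto simp: prod_eq_iff)
qed

end
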